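(* Let $m,n$ be positive integers. The chromatic polynomial of a biclique $A(\mathcal{F})$ with $|C|=n$ and $\mathcal{F}=(F_1,\ldots,F_m)$ is determined by $n$ and the numbers $\left|\bigcap_{i\in I}F_i\right|$ for the nonempty subsets $I\subseteq\{1,\ldots,m\}$. That is, if $\mathcal{F}=(F_1,\ldots,F_m)$ is a family of subsets of an $n$-set $C$ and $\mathcal{F}'=(F'_1,\ldots,F'_m)$ is a family of subsets of an $n$-set $C'$ such that $\left|\bigcap_{i\in I}F_i\right|=\left|\bigcap_{i\in I}F'_i\right|$ for every nonempty $I\subseteq\{1,\ldots,m\}$, then $A(\mathcal{F})$ and $A(\mathcal{F}')$ have the same chromatic polynomial.
   Context: Given an $n$-element set $C$ and a sequence $\mathcal{F}=(F_1,\ldots,F_m)$ of subsets of $C$, the biclique $A(\mathcal{F})$ is the simple graph with vertex set $C\cup D$, where $D=\{w_1,\ldots,w_m\}$ is disjoint from $C$, in which $C$ and $D$ each induce complete graphs and, for each $i$, the neighbours of $w_i$ in $C$ are exactly the vertices of $F_i$. The chromatic polynomial $P_G(q)$ of a graph $G$ is the polynomial whose value at each positive integer $q$ is the number of proper colourings of $G$ with $q$ colours. *)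

theory Defs
  imports Main "HOL-Library.FuncSet" "HOL-Computational_Algebra.Polynomial"
begin

text \<open>A finite simple graph is given by a vertex set V and a symmetric irreflexive
adjacency relation E (only pairs of vertices in V matter).\<close>

definition proper_colourings :: "'v set \<Rightarrow> ('v \<Rightarrow> 'v \<Rightarrow> bool) \<Rightarrow> nat \<Rightarrow> ('v \<Rightarrow> nat) set" where
  "proper_colourings V E q =
     {c \<in> V \<rightarrow>\<^sub>E {0..<q}. \<forall>u\<in>V. \<forall>v\<in>V. E u v \<longrightarrow> c u \<noteq> c v}"

definition num_colourings :: "'v set \<Rightarrow> ('v \<Rightarrow> 'v \<Rightarrow> bool) \<Rightarrow> nat \<Rightarrow> nat" where
  "num_colourings V E q = card (proper_colourings V E q)"

definition chromatic_polynomial :: "'v set \<Rightarrow> ('v \<Rightarrow> 'v \<Rightarrow> bool) \<Rightarrow> int poly" where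
  "chromatic_polynomial V E =
     (THE p. \<forall>q::nat. q > 0 \<longrightarrow> poly p (int q) = int (num_colourings V E q))"

text \<open>The biclique A(F) for C and F = (F_1,...,F_m): vertices Inl x for x in C and
Inr i (= w_i) for i in {1..m}.\<close>
definition biclique_vertices :: "'a set \<Rightarrow> nat \<Rightarrow> ('a + nat) set" where
  "biclique_vertices C m = Inl ` C \<union> Inr ` {1..m}"

fun biclique_adj :: "'a set \<Rightarrow> nat \<Rightarrow> (nat \<Rightarrow> 'a set) \<Rightarrow> ('a + nat) \<Rightarrow> ('a + nat) \<Rightarrow> bool" where
  "biclique_adj C m F (Inl x) (Inl y) = (x \<noteq> y \<and> x \<in> C \<and> y \<in> C)"
| "biclique_adj C m F (Inr i) (Inr j) = (i \<noteq> j \<and> i \<in> {1..m} \<and> j \<in> {1..m})"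
| "biclique_adj C m F (Inl x) (Inr i) = (i \<in> {1..m} \<and> x \<in> F i)"
| "biclique_adj C m F (Inr i) (Inl x) = (i \<in> {1..m} \<and> x \<in> F i)"

definition biclique_chrom_poly :: "'a set \<Rightarrow> nat \<Rightarrow> (nat \<Rightarrow> 'a set) \<Rightarrow> int poly" where
  "biclique_chrom_poly C m F =
     chromatic_polynomial (biclique_vertices C m) (biclique_adj C m F)"

end

theory Submission
  imports Defs
begin

lemma colour_le:
  assumes fin: "finite V" and img: "\<sigma> ` V = V'"
    and adj: "\<forall>u\<in>V. \<forall>v\<in>V. E u v \<longrightarrow> E' (\<sigma> u) (\<sigma> v)"
  shows "num_colourings V' E' q \<le> num_colourings V E q"
proof -
  define \<Phi> where "\<Phi> c' = restrict (c' \<circ> \<sigma>) V" for c' :: "'b \<Rightarrow> nat"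
  have fP: "finite (proper_colourings V E q)"
    unfolding proper_colourings_def
    by (rule finite_subset[of _ "V \<rightarrow>\<^sub>E {0..<q}"]) (auto intro: finite_PiE fin)
  have sub: "\<Phi> ` proper_colourings V' E' q \<subseteq> proper_colourings V E q"
  proof
    fix c assume "c \<in> \<Phi> ` proper_colourings V' E' q"
    then obtain c' where c': "c' \<in> proper_colourings V' E' q" and c: "c = \<Phi> c'" by auto
    show "c \<in> proper_colourings V E q"
      using c' img adj unfolding c \<Phi>_def proper_colourings_def
      by (auto simp: PiE_def Pi_def)
  qed
  have inj: "inj_on \<Phi> (proper_colourings V' E' q)"
  proof (rule inj_onI)
    fix c1 c2 assume c1: "c1 \<in> proper_colourings V' E' q" and c2: "c2 \<in> proper_colourings V' E' q"
      and eq: "\<Phi> c1 = \<Phi> c2"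
    have e1: "c1 \<in> extensional V'" and e2: "c2 \<in> extensional V'"
      using c1 c2 unfolding proper_colourings_def by (auto simp: PiE_def)
    show "c1 = c2"
    proof (rule extensionalityI[OF e1 e2])
      fix y assume "y \<in> V'"
      then obtain x where x: "x \<in> V" "y = \<sigma> x" using img by auto
      have "\<Phi> c1 x = \<Phi> c2 x" using eq by simp
      then show "c1 y = c2 y" using x unfolding \<Phi>_def by simp
    qed
  qed
  show ?thesis unfolding num_colourings_def
    by (rule card_inj_on_le[OF inj sub fP])
qed

lemma colour_eq:
  assumes fin: "finite V" and bij: "bij_betw \<sigma> V V'"
    and adj: "\<forall>u\<in>V. \<forall>v\<in>V. E u v = E' (\<sigma> u) (\<sigma> v)"
  shows "num_colourings V' E' q = num_colourings V E q"
proof (rule antisym)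
  show "num_colourings V' E' q \<le> num_colourings V E q"
    apply (rule colour_le[OF fin]) using bij adj by (auto simp: bij_betw_def)
  define \<tau> where "\<tau> = inv_into V \<sigma>"
  have b2: "bij_betw \<tau> V' V" unfolding \<tau>_def by (rule bij_betw_inv_into[OF bij])
  have fin2: "finite V'" using bij fin bij_betw_finite by blast
  have st: "\<And>y. y \<in> V' \<Longrightarrow> \<sigma> (\<tau> y) = y"
    unfolding \<tau>_def using bij by (simp add: bij_betw_inv_into_right)
  have adj2: "\<forall>u\<in>V'. \<forall>v\<in>V'. E' u v \<longrightarrow> E (\<tau> u) (\<tau> v)"
  proof (intro ballI impI)
    fix u v assume u: "u \<in> V'" and v: "v \<in> V'" and e: "E' u v"
    have "\<tau> u \<in> V" "\<tau> v \<in> V" using b2 u v by (auto simp: bij_betw_def)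
    then show "E (\<tau> u) (\<tau> v)" using adj e st[OF u] st[OF v] by metis
  qed
  show "num_colourings V E q \<le> num_colourings V' E' q"
    apply (rule colour_le[where \<sigma>=\<tau>, OF fin2 _ adj2]) using b2 by (auto simp: bij_betw_def)
qed

lemma count_sum:
  assumes "finite C" "finite K" "\<forall>x\<in>C. P x \<subseteq> K"
  shows "card {x\<in>C. T \<subseteq> P x} = (\<Sum>S\<in>{S. S \<subseteq> K \<and> T \<subseteq> S}. card {x\<in>C. P x = S})"
proof -
  have eq: "{x\<in>C. T \<subseteq> P x} = (\<Union>S\<in>{S. S \<subseteq> K \<and> T \<subseteq> S}. {x\<in>C. P x = S})"
    using assms(3) by auto
  have fin: "finite {S. S \<subseteq> K \<and> T \<subseteq> S}" using assms(2) by simp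
  show ?thesis unfolding eq
    by (rule card_UN_disjoint[OF fin]) (use assms(1) in auto)
qed

lemma atoms_eq:
  assumes "finite C" "finite C'" "finite K" "\<forall>x\<in>C. P x \<subseteq> K" "\<forall>x\<in>C'. P' x \<subseteq> K"
    and g: "\<forall>T. T \<subseteq> K \<longrightarrow> card {x\<in>C. T \<subseteq> P x} = card {x\<in>C'. T \<subseteq> P' x}"
  shows "S \<subseteq> K \<Longrightarrow> card {x\<in>C. P x = S} = card {x\<in>C'. P' x = S}"
proof (induction "card (K - S)" arbitrary: S rule: less_induct)
  case (less S)
  have split: "{S'. S' \<subseteq> K \<and> S \<subseteq> S'} = insert S {S'. S' \<subseteq> K \<and> S \<subset> S'}"
    using less.prems by auto
  have fin: "finite {S'. S' \<subseteq> K \<and> S \<subset> S'}" using assms(3) by simp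
  have IH: "(\<Sum>S'\<in>{S'. S' \<subseteq> K \<and> S \<subset> S'}. card {x\<in>C. P x = S'})
      = (\<Sum>S'\<in>{S'. S' \<subseteq> K \<and> S \<subset> S'}. card {x\<in>C'. P' x = S'})"
  proof (rule sum.cong[OF refl])
    fix S' assume "S' \<in> {S'. S' \<subseteq> K \<and> S \<subset> S'}"
    then have S': "S' \<subseteq> K" "S \<subset> S'" by auto
    have "K - S' \<subset> K - S" using S' less.prems by auto
    then have "card (K - S') < card (K - S)"
      by (rule psubset_card_mono[rotated]) (use assms(3) in simp)
    then show "card {x\<in>C. P x = S'} = card {x\<in>C'. P' x = S'}" using less.hyps S' by blast
  qed
  have "card {x\<in>C. S \<subseteq> P x} = card {x\<in>C'. S \<subseteq> P' x}" using g less.prems by blast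
  then have "card {x\<in>C. P x = S} + (\<Sum>S'\<in>{S'. S' \<subseteq> K \<and> S \<subset> S'}. card {x\<in>C. P x = S'})
     = card {x\<in>C'. P' x = S} + (\<Sum>S'\<in>{S'. S' \<subseteq> K \<and> S \<subset> S'}. card {x\<in>C'. P' x = S'})"
    unfolding count_sum[OF assms(1,3,4)] count_sum[OF assms(2,3,5)] split
    using fin by simp
  then show ?case using IH by simp
qed

lemma glue_bij:
  assumes "finite C" "finite C'"
    and c: "\<forall>S. card {x\<in>C. P x = S} = card {x\<in>C'. P' x = S}"
  shows "\<exists>h. bij_betw h C C' \<and> (\<forall>x\<in>C. P' (h x) = P x)"
proof -
  have "\<forall>S. \<exists>f. bij_betw f {x\<in>C. P x = S} {x\<in>C'. P' x = S}"
  proof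
    fix S
    have f1: "finite {x\<in>C. P x = S}" using assms(1) by simp
    have f2: "finite {x\<in>C'. P' x = S}" using assms(2) by simp
    show "\<exists>f. bij_betw f {x\<in>C. P x = S} {x\<in>C'. P' x = S}"
      by (rule finite_same_card_bij[OF f1 f2]) (use c in blast)
  qed
  from choice[OF this] obtain b where b0: "\<forall>S. bij_betw (b S) {x\<in>C. P x = S} {x\<in>C'. P' x = S}"
    by blast
  have b: "\<And>S. bij_betw (b S) {x\<in>C. P x = S} {x\<in>C'. P' x = S}" using b0 by blast
  define h where "h x = b (P x) x" for x
  have hin: "\<And>x. x \<in> C \<Longrightarrow> h x \<in> C' \<and> P' (h x) = P x"
  proof -
    fix x assume "x \<in> C"
    then have "x \<in> {y\<in>C. P y = P x}" by simp
    then have "b (P x) x \<in> {y\<in>C'. P' y = P x}" using b[of "P x"] by (auto simp: bij_betw_def)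
    then show "h x \<in> C' \<and> P' (h x) = P x" unfolding h_def by simp
  qed
  have "bij_betw h C C'"
  proof (rule bij_betw_imageI)
    show "inj_on h C"
    proof (rule inj_onI)
      fix x y assume x: "x \<in> C" and y: "y \<in> C" and e: "h x = h y"
      then have "P x = P y" using hin by metis
      then have "b (P x) x = b (P x) y" using e unfolding h_def by simp
      moreover have "inj_on (b (P x)) {z\<in>C. P z = P x}" using b by (auto simp: bij_betw_def)
      ultimately show "x = y" using x y \<open>P x = P y\<close> by (auto dest: inj_onD)
    qed
    show "h ` C = C'"
    proof
      show "h ` C \<subseteq> C'" using hin by auto
      show "C' \<subseteq> h ` C"
      proof
        fix y assume y: "y \<in> C'"
        then have "y \<in> b (P' y) ` {x\<in>C. P x = P' y}" using b[of "P' y"] by (auto simp: bij_betw_def)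
        then obtain x where x: "x \<in> C" "P x = P' y" "y = b (P' y) x" by auto
        then have "y = h x" unfolding h_def by simp
        then show "y \<in> h ` C" using x(1) by blast
      qed
    qed
  qed
  then show ?thesis using hin by blast
qed

theorem proposition3:
  fixes C :: "'a set" and C' :: "'b set"
    and F :: "nat \<Rightarrow> 'a set" and F' :: "nat \<Rightarrow> 'b set"
    and m n :: nat
  assumes "m > 0" and "n > 0"
    and "finite C" and "card C = n"
    and "finite C'" and "card C' = n"
    and "\<forall>i\<in>{1..m}. F i \<subseteq> C"
    and "\<forall>i\<in>{1..m}. F' i \<subseteq> C'"
    and "\<forall>I. I \<subseteq> {1..m} \<and> I \<noteq> {} \<longrightarrow>
           card (\<Inter>i\<in>I. F i) = card (\<Inter>i\<in>I. F' i)"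
  shows "biclique_chrom_poly C m F = biclique_chrom_poly C' m F'"
proof -
  define P where "P x = {i\<in>{1..m}. x \<in> F i}" for x
  define P' where "P' x = {i\<in>{1..m}. x \<in> F' i}" for x
  have g: "\<forall>T. T \<subseteq> {1..m} \<longrightarrow> card {x\<in>C. T \<subseteq> P x} = card {x\<in>C'. T \<subseteq> P' x}"
  proof (intro allI impI)
    fix T assume T: "T \<subseteq> {1..m}"
    show "card {x\<in>C. T \<subseteq> P x} = card {x\<in>C'. T \<subseteq> P' x}"
    proof (cases "T = {}")
      case True then show ?thesis using assms(4,6) by simp
    next
      case False
      obtain i0 where i0: "i0 \<in> T" using False by blast
      have e1: "{x\<in>C. T \<subseteq> P x} = (\<Inter>i\<in>T. F i)"
      proof (rule set_eqI)
        fix x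
        have "F i0 \<subseteq> C" using assms(7) T i0 by blast
        then show "x \<in> {x\<in>C. T \<subseteq> P x} \<longleftrightarrow> x \<in> (\<Inter>i\<in>T. F i)"
          using T i0 unfolding P_def by auto
      qed
      have e2: "{x\<in>C'. T \<subseteq> P' x} = (\<Inter>i\<in>T. F' i)"
      proof (rule set_eqI)
        fix x
        have "F' i0 \<subseteq> C'" using assms(8) T i0 by blast
        then show "x \<in> {x\<in>C'. T \<subseteq> P' x} \<longleftrightarrow> x \<in> (\<Inter>i\<in>T. F' i)"
          using T i0 unfolding P'_def by auto
      qed
      have "card (\<Inter>i\<in>T. F i) = card (\<Inter>i\<in>T. F' i)" using assms(9) T False by simp
      then show ?thesis unfolding e1 e2 .
    qed
  qed
  have atoms: "\<forall>S. card {x\<in>C. P x = S} = card {x\<in>C'. P' x = S}"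
  proof
    fix S show "card {x\<in>C. P x = S} = card {x\<in>C'. P' x = S}"
    proof (cases "S \<subseteq> {1..m}")
      case True
      have p1: "\<forall>x\<in>C. P x \<subseteq> {1..m}" unfolding P_def by auto
      have p2: "\<forall>x\<in>C'. P' x \<subseteq> {1..m}" unfolding P'_def by auto
      show ?thesis by (rule atoms_eq[OF assms(3,5) finite_atLeastAtMost p1 p2 g True])
    next
      case False
      then have e: "{x\<in>C. P x = S} = {}" "{x\<in>C'. P' x = S} = {}" unfolding P_def P'_def by auto
      show ?thesis unfolding e by simp
    qed
  qed
  obtain h where h: "bij_betw h C C'" and hP: "\<forall>x\<in>C. P' (h x) = P x"
    using glue_bij[OF assms(3,5) atoms] by blast
  have hF: "\<And>x i. x \<in> C \<Longrightarrow> i \<in> {1..m} \<Longrightarrow> h x \<in> F' i \<longleftrightarrow> x \<in> F i"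
  proof -
    fix x i assume x: "x \<in> C" and i: "i \<in> {1..m}"
    have "i \<in> P' (h x) \<longleftrightarrow> i \<in> P x" using hP x by simp
    then show "h x \<in> F' i \<longleftrightarrow> x \<in> F i" using i unfolding P_def P'_def by simp
  qed
  define \<sigma> :: "'a + nat \<Rightarrow> 'b + nat" where "\<sigma> = case_sum (\<lambda>x. Inl (h x)) Inr"
  let ?V = "biclique_vertices C m" and ?V' = "biclique_vertices C' m"
  have hinj: "inj_on h C" and himg: "h ` C = C'" using h by (auto simp: bij_betw_def)
  have bs: "bij_betw \<sigma> ?V ?V'"
  proof (rule bij_betw_imageI)
    show "inj_on \<sigma> ?V"
    proof (rule inj_onI)
      fix u v assume u: "u \<in> ?V" and v: "v \<in> ?V" and e: "\<sigma> u = \<sigma> v"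
      show "u = v"
      proof (cases u)
        case (Inl x)
        then have x: "x \<in> C" using u by (auto simp: biclique_vertices_def)
        show ?thesis
        proof (cases v)
          case (Inl y)
          then have y: "y \<in> C" using v by (auto simp: biclique_vertices_def)
          have "h x = h y" using e \<open>u = Inl x\<close> Inl by (simp add: \<sigma>_def)
          then show ?thesis using hinj x y Inl \<open>u = Inl x\<close> by (simp add: inj_on_eq_iff)
        next
          case (Inr j) then show ?thesis using e \<open>u = Inl x\<close> by (simp add: \<sigma>_def)
        qed
      next
        case (Inr i) then show ?thesis using e by (cases v) (simp_all add: \<sigma>_def)
      qed
    qed
    have "\<sigma> ` ?V = Inl ` (h ` C) \<union> Inr ` {1..m}"
      unfolding biclique_vertices_def image_Un image_image \<sigma>_def by simp
    then show "\<sigma> ` ?V = ?V'" using himg by (simp add: biclique_vertices_def)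
  qed
  have adj: "\<forall>u\<in>?V. \<forall>v\<in>?V. biclique_adj C m F u v = biclique_adj C' m F' (\<sigma> u) (\<sigma> v)"
  proof (intro ballI)
    fix u v assume u: "u \<in> ?V" and v: "v \<in> ?V"
    show "biclique_adj C m F u v = biclique_adj C' m F' (\<sigma> u) (\<sigma> v)"
    proof (cases u)
      case (Inl x)
      then have x: "x \<in> C" using u by (auto simp: biclique_vertices_def)
      show ?thesis
      proof (cases v)
        case (Inl y)
        then have y: "y \<in> C" using v by (auto simp: biclique_vertices_def)
        have "h x = h y \<longleftrightarrow> x = y" using hinj x y by (auto dest: inj_onD)
        then show ?thesis using \<open>u = Inl x\<close> Inl x y himg by (auto simp: \<sigma>_def)
      next
        case (Inr i)
        then show ?thesis using \<open>u = Inl x\<close> x hF by (auto simp: \<sigma>_def)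
      qed
    next
      case (Inr i)
      show ?thesis
      proof (cases v)
        case (Inl y)
        then have y: "y \<in> C" using v by (auto simp: biclique_vertices_def)
        then show ?thesis using \<open>u = Inr i\<close> Inl hF by (auto simp: \<sigma>_def)
      next
        case (Inr j)
        then show ?thesis using \<open>u = Inr i\<close> by (auto simp: \<sigma>_def)
      qed
    qed
  qed
  have finV: "finite ?V" using assms(3) by (simp add: biclique_vertices_def)
  have eq: "\<And>q. num_colourings ?V (biclique_adj C m F) q = num_colourings ?V' (biclique_adj C' m F') q"
    using colour_eq[OF finV bs adj] by simp
  show ?thesis
    unfolding biclique_chrom_poly_def chromatic_polynomial_def eq ..
qed

end
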